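(* Let $\theta>0$, $\zeta>0$, $P>0$, $\beta=\lfloor1/\theta\rfloor$, $\alpha=1/\theta-\beta$, and $g_\ell=\zeta P\,\mathrm{sinc}(\ell/\theta)$ for $\ell\in\mathbb{Z}$. Define the interference power $$I=\frac{1}{\zeta P}\sum_{\ell\in\mathbb{Z},\,\ell\neq0}|g_\ell|^2 .$$ Then $$I=\zeta P\Big(\theta^2\big(\beta^2+2\alpha\beta+\alpha\big)-1\Big),$$ and consequently the matched-filter per-terminal capacity $\log\!\big(1+\zeta P/(N_0+I)\big)$ equals $\log\!\Big(1+\frac{\zeta P}{N_0+\zeta P(\theta^2(\beta^2+2\alpha\beta+\alpha)-1)}\Big)$. In particular $I=0$ whenever $1/\theta$ is an integer.
   Context: $\mathrm{sinc}(x)=\sin(\pi x)/(\pi x)$ with $\mathrm{sinc}(0)=1$; $\log$ is natural. $g_\ell$ is the (approximate) effective channel between terminals $\ell$ positions apart on a line with spacing $\Delta_x$ in front of a large surface, with $\theta=\lambda/(2\Delta_x)$, $\lambda$ the wavelength, $P$ the per-terminal transmit power, $N_0$ the noise power spectral density. *)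

theory Defs
  imports "HOL-Analysis.Analysis"
begin

definition sinc :: "real \<Rightarrow> real" where
  "sinc x = (if x = 0 then 1 else sin (pi * x) / (pi * x))"

definition gain :: "real \<Rightarrow> real \<Rightarrow> real \<Rightarrow> int \<Rightarrow> real" where
  "gain \<zeta> P \<theta> l = \<zeta> * P * sinc (real_of_int l / \<theta>)"

definition interference :: "real \<Rightarrow> real \<Rightarrow> real \<Rightarrow> real" where
  "interference \<zeta> P \<theta> =
     (1 / (\<zeta> * P)) * infsum (\<lambda>l. \<bar>gain \<zeta> P \<theta> l\<bar>^2) (UNIV - {0::int})"

end

theory Submission
  imports Defs
begin


lemma B_sums:
  fixes r y :: real
  assumes "0 \<le> r" "r < 1"
  shows "(\<lambda>n. r^(Suc n) * sin (real (Suc n) * y) / real (Suc n)) sums (- Im (Ln (1 - of_real r * cis y)))"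
proof -
  have n: "cmod (- (of_real r * cis y)) < 1" using assms by (simp add: norm_mult)
  from sums_Im[OF Ln_series'[OF n]]
  have "(\<lambda>n. Im (- ((of_real r * cis y) ^ n) / of_nat n)) sums Im (Ln (1 - of_real r * cis y))"
    by simp
  also have "(\<lambda>n. Im (- ((of_real r * cis y) ^ n) / of_nat n)) = (\<lambda>n. - (r^n * sin (real n * y)) / real n)"
    by (auto simp: sin_n_Im_cis_pow_n power_mult_distrib Im_divide_of_nat simp flip: of_real_power)
  finally have "(\<lambda>n. - (r^n * sin (real n * y)) / real n) sums Im (Ln (1 - of_real r * cis y))" .
  hence "(\<lambda>n. - (r^Suc n * sin (real (Suc n) * y)) / real (Suc n)) sums Im (Ln (1 - of_real r * cis y))"
    by (subst sums_Suc_iff) simp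
  from sums_minus[OF this] show ?thesis by simp
qed



definition Aser :: "real \<Rightarrow> real \<Rightarrow> real" where
  "Aser r y = (\<Sum>n. r^(Suc n) * cos (real (Suc n) * y) / (real (Suc n))^2)"

lemma summable_inv_sq: "summable (\<lambda>n. 1 / (real (Suc n))^2)"
  using inverse_squares_sums by (simp add: sums_iff add.commute)

lemma A_bound: "0 \<le> r \<Longrightarrow> r \<le> 1 \<Longrightarrow> norm (r^(Suc n) * cos (real (Suc n) * y) / (real (Suc n))^2) \<le> 1 / (real (Suc n))^2"
proof -
  assume r: "0 \<le> r" "r \<le> 1"
  have "\<bar>r^(Suc n) * cos (real (Suc n) * y)\<bar> \<le> 1"
    using r by (simp add: abs_mult power_le_one mult_le_one)
  thus ?thesis by (simp add: divide_right_mono)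
qed

lemma A_deriv:
  fixes r y :: real
  assumes "0 \<le> r" "r < 1"
  shows "(Aser r has_real_derivative Im (Ln (1 - of_real r * cis y))) (at y)"
proof -
  define f where "f n y = r^(Suc n) * cos (real (Suc n) * y) / (real (Suc n))^2" for n y
  define f' where "f' n y = - (r^(Suc n) * sin (real (Suc n) * y) / real (Suc n))" for n y
  have d: "(f n has_field_derivative f' n x) (at x within UNIV)" for n x
  proof -
    define k where "k = real (Suc n)"
    have k: "k > 0" by (simp add: k_def)
    have "((\<lambda>y. cos (k*y)) has_real_derivative (- sin(k*x) * k)) (at x)"
      by (auto intro!: derivative_eq_intros)
    from DERIV_cmult[OF this, of "r^Suc n / k^2"]
    have "((\<lambda>y. r^Suc n / k^2 * cos (k*y)) has_real_derivative (r^Suc n / k^2 * (- sin(k*x) * k))) (at x)" .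
    moreover have "f' n x = -(r^Suc n * sin(k*x)/k)" by (simp add: f'_def k_def)
    hence "r^Suc n / k^2 * (- sin(k*x) * k) = f' n x" using k
      by (simp add: power2_eq_square field_simps)
    moreover have "(\<lambda>y. r^Suc n / k^2 * cos (k*y)) = f n"
      by (auto simp: f_def k_def)
    ultimately show ?thesis by simp
  qed
  have u: "uniformly_convergent_on UNIV (\<lambda>n x. \<Sum>i<n. f' i x)"
  proof (rule Weierstrass_m_test'[where M = "\<lambda>n. r^Suc n"])
    fix n x
    have "\<bar>sin (real (Suc n) * x)\<bar> / real (Suc n) \<le> 1"
    proof -
      have "\<bar>sin (real (Suc n) * x)\<bar> \<le> 1" by (rule abs_sin_le_one)
      also have "1 \<le> real (Suc n)" by simp
      finally show ?thesis by simp
    qed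
    hence "r^Suc n * (\<bar>sin (real (Suc n) * x)\<bar> / real (Suc n)) \<le> r^Suc n * 1"
      using assms by (intro mult_left_mono) auto
    thus "norm (f' n x) \<le> r ^ Suc n" using assms by (simp add: f'_def abs_mult)
  next
    show "summable (\<lambda>n. r ^ Suc n)" using assms by (simp add: summable_geometric)
  qed
  have s0: "summable (\<lambda>n. f n 0)"
    using summable_comparison_test[OF _ summable_inv_sq] A_bound assms unfolding f_def
    by (metis (no_types, lifting) less_imp_le)
  from has_field_derivative_series'(2)[OF convex_UNIV d u _ s0] 
  have "((\<lambda>x. \<Sum>n. f n x) has_field_derivative (\<Sum>n. f' n y)) (at y)" by simp
  moreover have "(\<Sum>n. f' n y) = Im (Ln (1 - of_real r * cis y))"
    using sums_minus[OF B_sums[OF assms, of y]] unfolding f'_def by (simp add: sums_iff)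
  moreover have "Aser r = (\<lambda>x. \<Sum>n. f n x)" by (rule ext) (simp add: Aser_def f_def)
  ultimately show ?thesis by simp
qed



definition rk :: "nat \<Rightarrow> real" where "rk k = 1 - 1 / (real k + 2)"

lemma rk_bounds: "0 \<le> rk k" "rk k < 1"
  by (auto simp: rk_def field_simps)

lemma rk_lim: "rk \<longlonglongrightarrow> 1"
proof -
  have "(\<lambda>k. 1 / (real k + 2)) \<longlonglongrightarrow> 0"
  proof -
    have "(\<lambda>k. 1 / (real (Suc (Suc k)))) \<longlonglongrightarrow> 0"
      using LIMSEQ_Suc[OF LIMSEQ_Suc[OF lim_const_over_n[of 1]]] by simp
    thus ?thesis by (simp add: add.commute)
  qed
  from tendsto_diff[OF tendsto_const[of 1] this] show ?thesis
    by (simp add: rk_def[abs_def])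
qed

definition Fser :: "real \<Rightarrow> real" where
  "Fser y = (\<Sum>n. cos (real (Suc n) * y) / (real (Suc n))^2)"

lemma A_integral:
  assumes "0 \<le> r" "r < 1" "0 \<le> y"
  shows "((\<lambda>t. Im (Ln (1 - of_real r * cis t))) has_integral (Aser r y - Aser r 0)) {0..y}"
proof (rule fundamental_theorem_of_calculus[OF assms(3)])
  fix x assume "x \<in> {0..y}"
  have "(Aser r has_real_derivative Im (Ln (1 - of_real r * cis x))) (at x within {0..y})"
    by (rule has_field_derivative_at_within[OF A_deriv[OF assms(1,2)]])
  thus "(Aser r has_vector_derivative Im (Ln (1 - of_real r * cis x))) (at x within {0..y})"
    by (simp add: has_real_derivative_iff_has_vector_derivative)
qed

lemma A_lim: "(\<lambda>k. Aser (rk k) y) \<longlonglongrightarrow> Fser y"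
proof -
  have "((\<lambda>k. suminf (\<lambda>n. rk k^(Suc n) * cos (real (Suc n) * y) / (real (Suc n))^2))
        \<longlongrightarrow> suminf (\<lambda>n. 1^(Suc n) * cos (real (Suc n) * y) / (real (Suc n))^2)) sequentially"
  proof (rule conjunct2[OF conjunct2[OF tannerys_theorem[where M = "\<lambda>n. 1 / (real (Suc n))^2"]]])
    fix n
    show "((\<lambda>k. rk k^(Suc n) * cos (real (Suc n) * y) / (real (Suc n))^2) \<longlongrightarrow>
           1^(Suc n) * cos (real (Suc n) * y) / (real (Suc n))^2) sequentially"
      by (intro tendsto_intros rk_lim) auto
  next
    show "\<forall>\<^sub>F (n, k) in sequentially \<times>\<^sub>F sequentially.
            norm (rk k^(Suc n) * cos (real (Suc n) * y) / (real (Suc n))^2) \<le> 1 / (real (Suc n))^2"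
    proof (intro always_eventually, clarify)
      fix n k
      show "norm (rk k^(Suc n) * cos (real (Suc n) * y) / (real (Suc n))^2) \<le> 1 / (real (Suc n))^2"
        using A_bound[of "rk k" n y] rk_bounds[of k] by linarith
    qed
  qed (use summable_inv_sq in simp_all)
  thus ?thesis by (simp add: Aser_def[abs_def] Fser_def)
qed

lemma Im_Ln_lim:
  assumes "0 < t" "t < 2 * pi"
  shows "(\<lambda>k. Im (Ln (1 - of_real (rk k) * cis t))) \<longlonglongrightarrow> (t - pi) / 2"
proof -
  have nz: "1 - cis t \<notin> \<real>\<^sub>\<le>\<^sub>0"
  proof -
    have "cos t < 1"
    proof (cases "t \<le> pi")
      case True thus ?thesis using assms cos_monotone_0_pi[of 0 t] by simp
    next
      case False
      hence "cos (2*pi - t) < cos 0" using assms by (intro cos_monotone_0_pi) auto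
      thus ?thesis by simp
    qed
    thus ?thesis by (simp add: complex_nonpos_Reals_iff)
  qed
  have "(\<lambda>k. 1 - of_real (rk k) * cis t) \<longlonglongrightarrow> 1 - of_real 1 * cis t"
    by (intro tendsto_intros rk_lim)
  hence "(\<lambda>k. Ln (1 - of_real (rk k) * cis t)) \<longlonglongrightarrow> Ln (1 - cis t)"
    using isCont_tendsto_compose[OF continuous_at_Ln[OF nz]] by simp
  hence "(\<lambda>k. Im (Ln (1 - of_real (rk k) * cis t))) \<longlonglongrightarrow> Im (Ln (1 - cis t))"
    by (rule tendsto_Im)
  moreover have "Ln (1 - cis t) = complex_of_real (ln (2 * sin (t/2))) + \<i> * ((t - pi)/2)"
  proof (rule Ln_unique)
    have s: "sin (t/2) > 0" using assms by (intro sin_gt_zero) auto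
    have c1: "cos ((t - pi)/2) = sin (t/2)" 
      by (simp add: cos_diff diff_divide_distrib)
    have s1: "sin ((t - pi)/2) = - cos (t/2)"
      by (simp add: sin_diff diff_divide_distrib)
    have "cos t = 1 - 2 * (sin (t/2))^2" using cos_double_sin[of "t/2"] by simp
    moreover have "sin t = 2 * sin (t/2) * cos (t/2)" using sin_double[of "t/2"] by simp
    ultimately show "exp (complex_of_real (ln (2 * sin (t/2))) + \<i> * ((t - pi)/2)) = 1 - cis t"
      using s by (simp add: complex_eq_iff exp_add Re_exp Im_exp c1 s1 power2_eq_square)
    show "- pi < Im (complex_of_real (ln (2 * sin (t/2))) + \<i> * ((t - pi)/2))" using assms by simp
    show "Im (complex_of_real (ln (2 * sin (t/2))) + \<i> * ((t - pi)/2)) \<le> pi" using assms by simp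
  qed
  ultimately show ?thesis by simp
qed



lemma Fser_0: "Fser 0 = pi^2 / 6"
proof -
  have "(\<lambda>n. 1 / (real (Suc n))^2) sums (pi^2/6)"
    using inverse_squares_sums by (simp add: add.commute)
  thus ?thesis by (simp add: Fser_def sums_iff)
qed

lemma Im_Ln_bound:
  assumes "0 \<le> r" "r < 1"
  shows "\<bar>Im (Ln (1 - of_real r * cis t))\<bar> \<le> pi"
proof -
  have "r * cos t \<le> r * 1" using assms by (intro mult_left_mono) auto
  hence "Re (1 - of_real r * cis t) > 0" using assms by simp
  hence nz: "1 - of_real r * cis t \<noteq> 0" by (metis less_irrefl zero_complex.sel(1))
  show ?thesis using mpi_less_Im_Ln[OF nz] Im_Ln_le_pi[OF nz] by linarith
qed

lemma F_formula_pos: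
  assumes "0 < y" "y < 2 * pi"
  shows "Fser y = pi^2/6 - pi * y / 2 + y^2 / 4"
proof -
  define S where "S = {0..y}"
  define fk where "fk k t = (if t = 0 then -pi/2 else Im (Ln (1 - of_real (rk k) * cis t)))" for k t
  define g where "g t = (t - pi) / 2" for t :: real
  have fk_int: "(fk k has_integral (Aser (rk k) y - Aser (rk k) 0)) S" for k
    unfolding S_def
    by (rule has_integral_spike_finite[of "{0}", OF _ _ A_integral[OF rk_bounds assms(1)[THEN less_imp_le]]])
       (auto simp: fk_def)
  have d1: "fk k integrable_on S" for k using fk_int by blast
  have d2: "(\<lambda>x. pi) integrable_on S" unfolding S_def by (rule integrable_const_ivl)
  have d3: "norm (fk k x) \<le> pi" if "x \<in> S" for k x
      using Im_Ln_bound[OF rk_bounds, of k x] by (auto simp: fk_def)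
  have d4: "(\<lambda>k. fk k x) \<longlonglongrightarrow> g x" if "x \<in> S" for x
    proof (cases "x = 0")
      case True thus ?thesis by (simp add: fk_def g_def)
    next
      case False
      hence "0 < x" "x < 2 * pi" using that assms by (auto simp: S_def)
      from Im_Ln_lim[OF this] show ?thesis using False by (simp add: fk_def g_def)
    qed
  have "(\<lambda>k. integral S (fk k)) \<longlonglongrightarrow> integral S g"
    by (rule dominated_convergence(2)[OF d1 d2 d3 d4])
  hence lim1: "(\<lambda>k. Aser (rk k) y - Aser (rk k) 0) \<longlonglongrightarrow> integral S g"
  proof -
    have "(\<lambda>k. integral S (fk k)) = (\<lambda>k. Aser (rk k) y - Aser (rk k) 0)"
      using fk_int by (auto intro!: integral_unique)
    with \<open>(\<lambda>k. integral S (fk k)) \<longlonglongrightarrow> integral S g\<close> show ?thesis by simp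
  qed
  have lim2: "(\<lambda>k. Aser (rk k) y - Aser (rk k) 0) \<longlonglongrightarrow> Fser y - Fser 0"
    by (intro tendsto_diff A_lim)
  have gi: "(g has_integral (y^2/4 - pi*y/2 - (0^2/4 - pi*0/2))) S"
    unfolding S_def
  proof (rule fundamental_theorem_of_calculus)
    show "0 \<le> y" using assms by simp
    fix x assume "x \<in> {0..y}"
    have "((\<lambda>t. t^2/4 - pi*t/2) has_real_derivative g x) (at x within {0..y})"
      by (auto intro!: derivative_eq_intros simp: g_def field_simps)
    thus "((\<lambda>t. t^2/4 - pi*t/2) has_vector_derivative g x) (at x within {0..y})"
      by (simp add: has_real_derivative_iff_has_vector_derivative)
  qed
  have "Fser y - Fser 0 = integral S g" using LIMSEQ_unique[OF lim2 lim1] .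
  also have "\<dots> = y^2/4 - pi*y/2" using integral_unique[OF gi] by simp
  finally show ?thesis using Fser_0 by simp
qed

lemma F_formula:
  assumes "0 \<le> y" "y < 2 * pi"
  shows "Fser y = pi^2/6 - pi * y / 2 + y^2 / 4"
  using assms F_formula_pos[of y] Fser_0 by (cases "y = 0") auto



lemma sinc_sq: "x \<noteq> 0 \<Longrightarrow> (sinc x)^2 = (1 - cos (2 * pi * x)) / (2 * pi^2 * x^2)"
proof -
  assume x: "x \<noteq> 0"
  have "cos (2 * (pi * x)) = 1 - 2 * (sin (pi * x))^2" by (rule cos_double_sin)
  thus ?thesis using x by (simp add: sinc_def power_divide power_mult_distrib field_simps)
qed

lemma sinc_minus: "sinc (- x) = sinc x"
  by (simp add: sinc_def)

lemma cos_shift_int: "cos (x + 2 * pi * of_int m) = cos x"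
  by (simp add: cos_add)

lemma term_pos:
  fixes \<theta> \<zeta> P :: real and b :: int
  assumes "\<theta> > 0" "b = \<lfloor>1/\<theta>\<rfloor>"
  defines "a \<equiv> 1/\<theta>"
  defines "y \<equiv> 2 * pi * (a - of_int b)"
  shows "\<bar>gain \<zeta> P \<theta> (int (Suc n))\<bar>^2
       = (\<zeta>*P)^2 / (2 * pi^2 * a^2) * ((1 - cos (real (Suc n) * y)) / (real (Suc n))^2)"
proof -
  have a: "a > 0" using assms by (simp add: a_def)
  have x: "real_of_int (int (Suc n)) / \<theta> = real (Suc n) * a" by (simp add: a_def)
  have "cos (2 * pi * (real (Suc n) * a)) = cos (real (Suc n) * y + 2 * pi * of_int (int (Suc n) * b))"
    by (simp add: y_def algebra_simps)
  also have "\<dots> = cos (real (Suc n) * y)" by (rule cos_shift_int)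
  finally have c: "cos (2 * pi * (real (Suc n) * a)) = cos (real (Suc n) * y)" .
  have "\<bar>gain \<zeta> P \<theta> (int (Suc n))\<bar>^2 = (\<zeta>*P)^2 * (sinc (real (Suc n) * a))^2"
    unfolding gain_def x by (simp add: power_mult_distrib)
  also have "\<dots> = (\<zeta>*P)^2 * ((1 - cos (real (Suc n) * y)) / (2 * pi^2 * (real (Suc n) * a)^2))"
    using a by (subst sinc_sq) (simp, simp only: c)
  also have "\<dots> = (\<zeta>*P)^2 / (2 * pi^2 * a^2) * ((1 - cos (real (Suc n) * y)) / (real (Suc n))^2)"
    using a by (simp add: power_mult_distrib)
  finally show ?thesis .
qed

lemma gain_neg: "\<bar>gain \<zeta> P \<theta> (- l)\<bar>^2 = \<bar>gain \<zeta> P \<theta> l\<bar>^2"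
  by (simp add: gain_def sinc_minus[of "real_of_int l / \<theta>", symmetric])

lemma main_sum:
  fixes \<theta> \<zeta> P :: real
  assumes "\<theta> > 0"
  defines "a \<equiv> 1/\<theta>"
  defines "\<alpha> \<equiv> a - of_int \<lfloor>a\<rfloor>"
  shows "((\<lambda>l. \<bar>gain \<zeta> P \<theta> l\<bar>^2) has_sum ((\<zeta>*P)^2 * \<theta>^2 * (\<alpha> - \<alpha>^2))) (UNIV - {0::int})"
proof -
  define b where "b = \<lfloor>1/\<theta>\<rfloor>"
  define y where "y = 2 * pi * (a - of_int b)"
  define c where "c = (\<zeta>*P)^2 / (2 * pi^2 * a^2)"
  have a: "a > 0" using assms by (simp add: a_def)
  have \<alpha>: "0 \<le> \<alpha>" "\<alpha> < 1" unfolding \<alpha>_def by linarith+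
  have y: "y = 2 * pi * \<alpha>" by (simp add: y_def \<alpha>_def b_def a_def)
  have y0: "0 \<le> y" "y < 2 * pi" using \<alpha> by (simp_all add: y)
  have s1: "(\<lambda>n. 1 / (real (Suc n))^2) sums (pi^2/6)"
    using inverse_squares_sums by (simp add: add.commute)
  have s2: "(\<lambda>n. cos (real (Suc n) * y) / (real (Suc n))^2) sums (Fser y)"
  proof -
    have "summable (\<lambda>n. cos (real (Suc n) * y) / (real (Suc n))^2)"
      using summable_comparison_test[OF _ summable_inv_sq, of "\<lambda>n. cos (real (Suc n) * y) / (real (Suc n))^2"]
        A_bound[of 1] by simp
    thus ?thesis by (simp add: Fser_def summable_sums)
  qed
  have s3: "(\<lambda>n. (1 - cos (real (Suc n) * y)) / (real (Suc n))^2) sums (pi^2/6 - Fser y)"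
    using sums_diff[OF s1 s2] by (simp add: diff_divide_distrib)
  have val: "pi^2/6 - Fser y = pi^2 * (\<alpha> - \<alpha>^2)"
    using F_formula[OF y0] by (simp add: y power2_eq_square algebra_simps)
  have "(\<lambda>n. c * ((1 - cos (real (Suc n) * y)) / (real (Suc n))^2)) sums (c * (pi^2 * (\<alpha> - \<alpha>^2)))"
    using sums_mult[OF s3, of c] val by simp
  also have "c * (pi^2 * (\<alpha> - \<alpha>^2)) = (\<zeta>*P)^2 * \<theta>^2 * (\<alpha> - \<alpha>^2) / 2"
    using assms a by (simp add: c_def a_def field_simps power2_eq_square)
  finally have sp: "(\<lambda>n. \<bar>gain \<zeta> P \<theta> (int (Suc n))\<bar>^2) sums ((\<zeta>*P)^2 * \<theta>^2 * (\<alpha> - \<alpha>^2) / 2)"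
    using term_pos[OF assms(1) b_def, of \<zeta> P] by (simp add: c_def y_def a_def)
  hence hp: "((\<lambda>n. \<bar>gain \<zeta> P \<theta> (int (Suc n))\<bar>^2) has_sum ((\<zeta>*P)^2 * \<theta>^2 * (\<alpha> - \<alpha>^2) / 2)) UNIV"
    by (rule sums_nonneg_imp_has_sum) simp
  have hn: "((\<lambda>n. \<bar>gain \<zeta> P \<theta> (- int (Suc n))\<bar>^2) has_sum ((\<zeta>*P)^2 * \<theta>^2 * (\<alpha> - \<alpha>^2) / 2)) UNIV"
    using hp by (simp only: gain_neg)
  have inj1: "inj_on (\<lambda>n. int (Suc n)) UNIV" by (auto simp: inj_on_def)
  have inj2: "inj_on (\<lambda>n. - int (Suc n)) UNIV" by (auto simp: inj_on_def)
  have HP: "((\<lambda>l. \<bar>gain \<zeta> P \<theta> l\<bar>^2) has_sum ((\<zeta>*P)^2 * \<theta>^2 * (\<alpha> - \<alpha>^2) / 2)) (range (\<lambda>n. int (Suc n)))"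
    by (subst has_sum_reindex[OF inj1]) (use hp in \<open>simp add: o_def\<close>)
  have HN: "((\<lambda>l. \<bar>gain \<zeta> P \<theta> l\<bar>^2) has_sum ((\<zeta>*P)^2 * \<theta>^2 * (\<alpha> - \<alpha>^2) / 2)) (range (\<lambda>n. - int (Suc n)))"
    by (subst has_sum_reindex[OF inj2]) (use hn in \<open>simp add: o_def\<close>)
  have "((\<lambda>l. \<bar>gain \<zeta> P \<theta> l\<bar>^2) has_sum ((\<zeta>*P)^2 * \<theta>^2 * (\<alpha> - \<alpha>^2) / 2 + (\<zeta>*P)^2 * \<theta>^2 * (\<alpha> - \<alpha>^2) / 2))
          (range (\<lambda>n. int (Suc n)) \<union> range (\<lambda>n. - int (Suc n)))"
    by (rule has_sum_Un_disjoint[OF HP HN]) auto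
  moreover have "range (\<lambda>n. int (Suc n)) \<union> range (\<lambda>n. - int (Suc n)) = UNIV - {0::int}"
  proof (rule set_eqI, rule iffI)
    fix l :: int assume "l \<in> range (\<lambda>n. int (Suc n)) \<union> range (\<lambda>n. - int (Suc n))"
    thus "l \<in> UNIV - {0}" by auto
  next
    fix l :: int assume l: "l \<in> UNIV - {0}"
    show "l \<in> range (\<lambda>n. int (Suc n)) \<union> range (\<lambda>n. - int (Suc n))"
    proof (cases "l > 0")
      case True
      hence "l = int (Suc (nat l - 1))" by simp
      thus ?thesis by blast
    next
      case False
      hence "l = - int (Suc (nat (-l) - 1))" using l by simp
      thus ?thesis by blast
    qed
  qed
  ultimately show ?thesis by (simp add: algebra_simps)
qed


theorem mainTheorem4:
  fixes \<theta> \<zeta> P N0 \<alpha> \<beta> :: real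
  assumes "\<theta> > 0" and "\<zeta> > 0" and "P > 0"
    and "\<beta> = of_int \<lfloor>1 / \<theta>\<rfloor>"
    and "\<alpha> = 1 / \<theta> - \<beta>"
  shows "(\<lambda>l. \<bar>gain \<zeta> P \<theta> l\<bar>^2) summable_on (UNIV - {0::int})
    \<and> interference \<zeta> P \<theta> = \<zeta> * P * (\<theta>^2 * (\<beta>^2 + 2 * \<alpha> * \<beta> + \<alpha>) - 1)
    \<and> ln (1 + \<zeta> * P / (N0 + interference \<zeta> P \<theta>))
        = ln (1 + \<zeta> * P / (N0 + \<zeta> * P * (\<theta>^2 * (\<beta>^2 + 2 * \<alpha> * \<beta> + \<alpha>) - 1)))
    \<and> (1 / \<theta> \<in> \<int> \<longrightarrow> interference \<zeta> P \<theta> = 0)"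
proof -
  have hs: "((\<lambda>l. \<bar>gain \<zeta> P \<theta> l\<bar>^2) has_sum ((\<zeta>*P)^2 * \<theta>^2 * (\<alpha> - \<alpha>^2))) (UNIV - {0::int})"
    using main_sum[OF assms(1), of \<zeta> P] assms(4,5) by simp
  have I: "interference \<zeta> P \<theta> = \<zeta> * P * \<theta>^2 * (\<alpha> - \<alpha>^2)"
    using infsumI[OF hs] assms(2,3) by (simp add: interference_def power2_eq_square field_simps)
  have ab: "\<theta> * (\<alpha> + \<beta>) = 1" using assms(1,5) by simp
  have eq: "\<zeta> * P * (\<theta>^2 * (\<beta>^2 + 2 * \<alpha> * \<beta> + \<alpha>) - 1) = \<zeta> * P * \<theta>^2 * (\<alpha> - \<alpha>^2)"
  proof -
    have "\<theta>^2 * (\<beta>^2 + 2 * \<alpha> * \<beta> + \<alpha>) - 1 = \<theta>^2 * (\<beta>^2 + 2 * \<alpha> * \<beta> + \<alpha>) - (\<theta> * (\<alpha> + \<beta>))^2"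
      using ab by simp
    also have "\<dots> = \<theta>^2 * (\<alpha> - \<alpha>^2)" by (simp add: power2_eq_square algebra_simps)
    finally show ?thesis by simp
  qed
  have int: "interference \<zeta> P \<theta> = 0" if "1 / \<theta> \<in> \<int>"
  proof -
    from that obtain m :: int where "1 / \<theta> = of_int m" by (auto elim: Ints_cases)
    hence "\<alpha> = 0" using assms(4,5) by simp
    thus ?thesis using I by simp
  qed
  show ?thesis using hs I eq int by (auto simp: has_sum_iff mult.assoc)
qed

end
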